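(* Consider the $r$-cGA (without frequency borders) maximizing \textit{G}-OneMax on $\{0,\dots,r-1\}^n$, and suppose that at some time the frequency $p^{(t)}_{i,r-1}$ has reached a value of at least $k/r$, where $k>0$. Suppose $K\ge c\,r^2\sqrt{n}\log n$ for a sufficiently large constant $c$, and $K$ and $r$ are bounded by polynomials in $n$. Then, for a constant $c'>0$, the probability that $p^{(t)}_{i,r-1}$ drops below $k/r-1/(2r)$ within the next $T^{*}=c'Kr\sqrt{n}(\log r+\log n)$ iterations is at most $n^{-c''}$, where $c''\ge K/(288r^2\sqrt{n}\ln n)$.
   Context: Let $n\ge 1$, $r\ge 2$ be integers and $K>0$. \textit{G}-OneMax$(x)=\sum_{i=1}^n x_i$ for $x\in\{0,\dots,r-1\}^n$. The $r$-valued compact genetic algorithm ($r$-cGA) with parameter $K$ maintains frequencies $p^{(t)}_{i,j}$ for $i\in\{1,\dots,n\}$, $j\in\{0,\dots,r-1\}$, initially all $1/r$. In iteration $t$ it samples two strings $x,y$ independently, each position $i$ of each string taking value $j$ with probability $p^{(t)}_{i,j}$ independently of other positions; if $f(x)<f(y)$ then $x$ and $y$ are swapped; then for all $i,j$, $p^{(t+1)}_{i,j}=p^{(t)}_{i,j}+\frac1K(\mathbf 1[x_i=j]-\mathbf 1[y_i=j])$. Here $f$ is the function to be maximized. *)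

theory Defs
  imports "HOL-Probability.Probability"
begin

text \<open>Positions are indexed 0..n-1 and values 0..r-1. A search point is a function
  nat => nat (only positions below n matter); a frequency state is
  p :: nat => nat => real, p i j = frequency of value j at position i.\<close>

definition gonemax :: "nat \<Rightarrow> (nat \<Rightarrow> nat) \<Rightarrow> real" where
  "gonemax n x = (\<Sum>i<n. real (x i))"

text \<open>Distribution of one position: value j with probability q j (j < r).
  If q is not a probability vector (cannot be sampled from), an arbitrary fallback is used.\<close>
definition pos_pmf :: "nat \<Rightarrow> (nat \<Rightarrow> real) \<Rightarrow> nat pmf" where
  "pos_pmf r q = (if (\<forall>j<r. 0 \<le> q j) \<and> (\<Sum>j<r. q j) = 1
                   then embed_pmf (\<lambda>j. if j < r then q j else 0) else return_pmf 0)"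

definition sample_pmf :: "nat \<Rightarrow> nat \<Rightarrow> (nat \<Rightarrow> nat \<Rightarrow> real) \<Rightarrow> (nat \<Rightarrow> nat) pmf" where
  "sample_pmf n r p = Pi_pmf {..<n} 0 (\<lambda>i. pos_pmf r (p i))"

definition cga_step :: "nat \<Rightarrow> nat \<Rightarrow> real \<Rightarrow> ((nat \<Rightarrow> nat) \<Rightarrow> real)
    \<Rightarrow> (nat \<Rightarrow> nat \<Rightarrow> real) \<Rightarrow> (nat \<Rightarrow> nat \<Rightarrow> real) pmf" where
  "cga_step n r K f p =
     bind_pmf (sample_pmf n r p) (\<lambda>x0. bind_pmf (sample_pmf n r p) (\<lambda>y0.
       let x = (if f x0 < f y0 then y0 else x0);
           y = (if f x0 < f y0 then x0 else y0)
       in return_pmf (\<lambda>i j. p i j + ((if x i = j then 1 else 0) - (if y i = j then 1 else 0)) / K)))"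

definition cga_init :: "nat \<Rightarrow> nat \<Rightarrow> nat \<Rightarrow> real" where
  "cga_init r = (\<lambda>i j. if j < r then 1 / real r else 0)"

fun cga_run :: "nat \<Rightarrow> nat \<Rightarrow> real \<Rightarrow> ((nat \<Rightarrow> nat) \<Rightarrow> real)
    \<Rightarrow> (nat \<Rightarrow> nat \<Rightarrow> real) \<Rightarrow> nat \<Rightarrow> (nat \<Rightarrow> nat \<Rightarrow> real) pmf" where
  "cga_run n r K f p 0 = return_pmf p"
| "cga_run n r K f p (Suc t) = bind_pmf (cga_run n r K f p t) (cga_step n r K f)"

fun cga_traj :: "nat \<Rightarrow> nat \<Rightarrow> real \<Rightarrow> ((nat \<Rightarrow> nat) \<Rightarrow> real)
    \<Rightarrow> (nat \<Rightarrow> nat \<Rightarrow> real) \<Rightarrow> nat \<Rightarrow> (nat \<Rightarrow> nat \<Rightarrow> real) list pmf" where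
  "cga_traj n r K f p 0 = return_pmf [p]"
| "cga_traj n r K f p (Suc t) =
     bind_pmf (cga_traj n r K f p t) (\<lambda>ps. map_pmf (\<lambda>q. ps @ [q]) (cga_step n r K f (last ps)))"

end

theory Submission
  imports Defs
begin

definition alpha :: "nat \<Rightarrow> nat \<Rightarrow> real" where
  "alpha r c = (if c = r - 1 then 1 else 0)"

definition dval :: "nat \<Rightarrow> nat \<Rightarrow> nat \<Rightarrow> nat \<Rightarrow> nat \<Rightarrow> real" where
  "dval r c1 f1 c2 f2 = (if f1 < f2 then alpha r c2 - alpha r c1 else alpha r c1 - alpha r c2)"

definition hh :: "nat \<Rightarrow> real \<Rightarrow> (nat \<times> nat) \<times> (nat \<times> nat) \<Rightarrow> real" where
  "hh r l z = (case z of ((c1,s1),(c2,s2)) \<Rightarrow> exp (- l * dval r c1 (c1+s1) c2 (c2+s2)))"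

lemma int_bdd:
  fixes f :: "'a \<Rightarrow> real"
  assumes "\<And>x. \<bar>f x\<bar> \<le> B"
  shows "integrable (measure_pmf M) f"
  by (rule measure_pmf.integrable_const_bound[where B=B]) (use assms in auto)

lemma alpha_bdd: "\<bar>alpha r c\<bar> \<le> 1" "0 \<le> alpha r c"
  by (auto simp: alpha_def)

lemma dval_bdd: "\<bar>dval r c1 f1 c2 f2\<bar> \<le> 1"
  by (auto simp: dval_def alpha_def)

lemma hh_bdd: "0 \<le> l \<Longrightarrow> \<bar>hh r l z\<bar> \<le> exp l"
proof -
  assume l: "0 \<le> l"
  obtain c1 s1 c2 s2 where z: "z = ((c1,s1),(c2,s2))" by (metis prod.collapse)
  have "- l * dval r c1 (c1+s1) c2 (c2+s2) \<le> l"
    using dval_bdd[of r c1 "c1+s1" c2 "c2+s2"] l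
    by (smt (verit, best) mult_le_cancel_left1 mult_minus_left abs_le_D2 mult.commute)
  then show ?thesis by (simp add: z hh_def)
qed

lemma pair_swap_inv: "map_pmf (\<lambda>(a,b). (b,a)) (pair_pmf X X) = pair_pmf X X"
  by (metis pair_commute_pmf)

definition sig :: "(nat \<times> nat) \<times> (nat \<times> nat) \<Rightarrow> (nat \<times> nat) \<times> (nat \<times> nat)" where
  "sig z = (case z of ((c1,s1),(c2,s2)) \<Rightarrow> ((c1,s2),(c2,s1)))"

definition tau :: "(nat \<times> nat) \<times> (nat \<times> nat) \<Rightarrow> (nat \<times> nat) \<times> (nat \<times> nat)" where
  "tau z = (case z of ((c1,s1),(c2,s2)) \<Rightarrow> ((c1,c2),(s1,s2)))"

lemma sig_inj: "inj sig"
  by (rule injI) (auto simp: sig_def split: prod.splits)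
lemma sig_sig: "sig (sig z) = z"
  by (auto simp: sig_def split: prod.splits)
lemma tau_inj: "inj tau"
  by (rule injI) (auto simp: tau_def split: prod.splits)

lemma sig_inv: "map_pmf sig (pair_pmf (pair_pmf \<nu> \<mu>) (pair_pmf \<nu> \<mu>)) = pair_pmf (pair_pmf \<nu> \<mu>) (pair_pmf \<nu> \<mu>)"
proof (rule pmf_eqI)
  fix z :: "(nat \<times> nat) \<times> (nat \<times> nat)"
  obtain c1 s1 c2 s2 where z: "z = ((c1,s1),(c2,s2))" by (metis prod.collapse)
  have "pmf (map_pmf sig (pair_pmf (pair_pmf \<nu> \<mu>) (pair_pmf \<nu> \<mu>))) (sig (sig z))
      = pmf (pair_pmf (pair_pmf \<nu> \<mu>) (pair_pmf \<nu> \<mu>)) (sig z)"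
    by (rule pmf_map_inj'[OF sig_inj])
  then show "pmf (map_pmf sig (pair_pmf (pair_pmf \<nu> \<mu>) (pair_pmf \<nu> \<mu>))) z = pmf (pair_pmf (pair_pmf \<nu> \<mu>) (pair_pmf \<nu> \<mu>)) z"
    by (simp add: sig_sig z sig_def pmf_pair)
qed

lemma tau_map: "map_pmf tau (pair_pmf (pair_pmf \<nu> \<mu>) (pair_pmf \<nu> \<mu>)) = pair_pmf (pair_pmf \<nu> \<nu>) (pair_pmf \<mu> \<mu>)"
proof (rule pmf_eqI)
  fix z :: "(nat \<times> nat) \<times> (nat \<times> nat)"
  obtain c1 s1 c2 s2 where z: "z = ((c1,c2),(s1,s2))" by (metis prod.collapse)
  have zz: "z = tau ((c1,s1),(c2,s2))" by (simp add: z tau_def)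
  show "pmf (map_pmf tau (pair_pmf (pair_pmf \<nu> \<mu>) (pair_pmf \<nu> \<mu>))) z = pmf (pair_pmf (pair_pmf \<nu> \<nu>) (pair_pmf \<mu> \<mu>)) z"
    unfolding zz pmf_map_inj'[OF tau_inj] by (simp add: tau_def pmf_pair)
qed

definition xf :: "nat \<Rightarrow> (nat \<times> nat) \<times> (nat \<times> nat) \<Rightarrow> real" where
  "xf r z = (case z of ((c1,s1),(c2,s2)) \<Rightarrow> (alpha r c1 - alpha r c2) * sgn (real (c1+s1) - real (c2+s2)))"

definition Dset :: "nat \<Rightarrow> ((nat \<times> nat) \<times> (nat \<times> nat)) set" where
  "Dset r = {z. alpha r (fst (fst z)) \<noteq> alpha r (fst (snd z))}"

definition Eset :: "nat \<Rightarrow> ((nat \<times> nat) \<times> (nat \<times> nat)) set" where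
  "Eset r = {z. alpha r (fst (fst z)) \<noteq> alpha r (fst (snd z)) \<and> snd (fst z) = snd (snd z)}"

lemma hh_pair:
  "hh r l z + hh r l (case z of (a,b) \<Rightarrow> (b,a)) =
     2 + (exp l + exp (-l) - 2) * indicator (Dset r) z - (exp l - exp (-l)) * xf r z"
proof -
  obtain c1 s1 c2 s2 where z: "z = ((c1,s1),(c2,s2))" by (metis prod.collapse)
  have a1: "alpha r c1 = 0 \<or> alpha r c1 = 1" and a2: "alpha r c2 = 0 \<or> alpha r c2 = 1"
    by (auto simp: alpha_def)
  consider "c1 + s1 < c2 + s2" | "c1 + s1 = c2 + s2" | "c1 + s1 > c2 + s2" by linarith
  then show ?thesis
  proof cases
    case 2
    then have e: "sgn (real (c1 + s1) - real (c2 + s2)) = 0" by simp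
    show ?thesis using a1 a2 2 unfolding z hh_def dval_def xf_def Dset_def indicator_def e
      by (auto simp del: of_nat_add)
  qed (use a1 a2 in \<open>auto simp: z hh_def dval_def xf_def Dset_def indicator_def\<close>)
qed

lemma xf_pair:
  assumes "c1 < r" "c2 < r"
  shows "xf r ((c1,s1),(c2,s2)) + xf r (sig ((c1,s1),(c2,s2))) \<ge> 2 * indicator (Eset r) ((c1,s1),(c2,s2))"
proof -
  have eq: "xf r ((c1,s1),(c2,s2)) + xf r (sig ((c1,s1),(c2,s2))) = (alpha r c1 - alpha r c2) *
     (sgn (real (c1 + s1) - real (c2 + s2)) + sgn (real (c1 + s2) - real (c2 + s1)))"
    by (simp add: xf_def sig_def algebra_simps del: of_nat_add)
  have ind: "indicator (Eset r) ((c1,s1),(c2,s2)) = (if alpha r c1 \<noteq> alpha r c2 \<and> s1 = s2 then 1 else (0::real))"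
    by (simp add: Eset_def indicator_def)
  consider "alpha r c1 = alpha r c2" | "c1 = r - 1" "c2 < r - 1" | "c2 = r - 1" "c1 < r - 1"
    using assms by (cases "c1 = r - 1"; cases "c2 = r - 1") (auto simp: alpha_def)
  then show ?thesis
  proof cases
    case 1 then show ?thesis unfolding eq ind by simp
  next
    case 2
    then have "alpha r c1 = 1" "alpha r c2 = 0" by (auto simp: alpha_def)
    moreover have "sgn (real (c1 + s1) - real (c2 + s2)) + sgn (real (c1 + s2) - real (c2 + s1)) \<ge> 2 * (if s1 = s2 then 1 else 0)"
      using 2 by (auto simp: sgn_if)
    ultimately show ?thesis unfolding eq ind by simp
  next
    case 3
    then have "alpha r c1 = 0" "alpha r c2 = 1" by (auto simp: alpha_def)
    moreover have "sgn (real (c1 + s1) - real (c2 + s2)) + sgn (real (c1 + s2) - real (c2 + s1)) \<le> -2 * (if s1 = s2 then 1 else 0)"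
      using 3 by (auto simp: sgn_if)
    ultimately show ?thesis unfolding eq ind by simp
  qed
qed

lemma exp_ineq:
  fixes l \<rho> :: real
  assumes l: "0 \<le> l" and r: "exp l - 1 \<le> 2 * \<rho>"
  shows "exp l + exp (-l) - 2 \<le> (exp l - exp (-l)) * \<rho>"
proof -
  define y where "y = exp l"
  have y1: "y \<ge> 1" using l by (simp add: y_def)
  have em: "exp (-l) = 1 / y" by (simp add: y_def exp_minus field_simps)
  have rho0: "\<rho> \<ge> 0" using r y1 y_def by linarith
  have "(y - 1) * (y - 1) \<le> (y - 1) * ((y + 1) * \<rho>)"
  proof (rule mult_left_mono)
    have "2 * \<rho> \<le> (y + 1) * \<rho>" by (rule mult_right_mono) (use y1 rho0 in auto)
    then show "y - 1 \<le> (y + 1) * \<rho>" using r unfolding y_def[symmetric] by linarith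
  qed (use y1 in simp)
  then have "(y - 1)^2 \<le> (y*y - 1) * \<rho>" by (simp add: power2_eq_square algebra_simps)
  then have "(y - 1)^2 / y \<le> (y*y - 1) * \<rho> / y" by (rule divide_right_mono) (use y1 in simp)
  then have "(y - 1)^2 / y \<le> ((y*y - 1) / y) * \<rho>" by simp
  moreover have "y + 1/y - 2 = (y - 1)^2 / y" using y1 by (simp add: field_simps power2_eq_square)
  moreover have "y - 1/y = (y*y - 1) / y" using y1 by (simp add: field_simps)
  ultimately show ?thesis by (simp add: em y_def[symmetric])
qed

lemma core:
  fixes \<nu> \<mu> :: "nat pmf"
  assumes nu: "set_pmf \<nu> \<subseteq> {..<r}" and l: "0 \<le> l" and rho: "exp l - 1 \<le> 2 * \<rho>"
    and rhodef: "\<rho> = measure_pmf.prob (pair_pmf \<mu> \<mu>) {p. fst p = snd p}"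
  shows "measure_pmf.expectation (pair_pmf (pair_pmf \<nu> \<mu>) (pair_pmf \<nu> \<mu>)) (hh r l) \<le> 1"
proof -
  define Y where "Y = pair_pmf (pair_pmf \<nu> \<mu>) (pair_pmf \<nu> \<mu>)"
  define sw :: "(nat \<times> nat) \<times> (nat \<times> nat) \<Rightarrow> (nat \<times> nat) \<times> (nat \<times> nat)" where "sw = (\<lambda>(a,b). (b,a))"
  define A where "A = exp l + exp (-l) - 2"
  define B where "B = exp l - exp (-l)"
  have B0: "B \<ge> 0" using l by (simp add: B_def)
  have ihh: "integrable (measure_pmf M) (hh r l)" for M
    by (rule int_bdd[where B="exp l"]) (rule hh_bdd[OF l])
  have ihh2: "integrable (measure_pmf M) (\<lambda>z. hh r l (sw z))" for M
    by (rule int_bdd[where B="exp l"]) (rule hh_bdd[OF l])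
  have ixf: "integrable (measure_pmf M) (xf r)" for M
    by (rule int_bdd[where B=1]) (auto simp: xf_def alpha_def sgn_if split: prod.splits)
  have ixf2: "integrable (measure_pmf M) (\<lambda>z. xf r (sig z))" for M
    by (rule int_bdd[where B=1]) (auto simp: xf_def alpha_def sgn_if split: prod.splits)
  have iind: "integrable (measure_pmf M) (indicator S :: _ \<Rightarrow> real)" for M S
    by (rule int_bdd[where B=1]) (auto simp: indicator_def)
  have a: "measure_pmf.expectation Y (hh r l) = measure_pmf.expectation Y (\<lambda>z. hh r l (sw z))"
  proof -
    have "measure_pmf.expectation Y (hh r l) = measure_pmf.expectation (map_pmf sw Y) (hh r l)"
      unfolding Y_def sw_def pair_swap_inv ..
    then show ?thesis by simp
  qed
  have b: "measure_pmf.expectation Y (xf r) = measure_pmf.expectation Y (\<lambda>z. xf r (sig z))"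
  proof -
    have "measure_pmf.expectation Y (xf r) = measure_pmf.expectation (map_pmf sig Y) (xf r)"
      unfolding Y_def sig_inv ..
    then show ?thesis by simp
  qed
  have sum1: "2 * measure_pmf.expectation Y (hh r l) = 2 + A * measure_pmf.prob Y (Dset r) - B * measure_pmf.expectation Y (xf r)"
  proof -
    have "2 * measure_pmf.expectation Y (hh r l) = measure_pmf.expectation Y (\<lambda>z. hh r l z + hh r l (sw z))"
      using a by (simp add: ihh ihh2)
    also have "\<dots> = measure_pmf.expectation Y (\<lambda>z. 2 + A * indicator (Dset r) z - B * xf r z)"
      by (rule Bochner_Integration.integral_cong[OF refl]) (simp add: hh_pair sw_def A_def B_def)
    also have "\<dots> = 2 + A * measure_pmf.prob Y (Dset r) - B * measure_pmf.expectation Y (xf r)"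
      by (simp add: ixf iind)
    finally show ?thesis .
  qed
  have sum2: "measure_pmf.expectation Y (xf r) \<ge> measure_pmf.prob Y (Eset r)"
  proof -
    have "2 * measure_pmf.prob Y (Eset r) = measure_pmf.expectation Y (\<lambda>z. 2 * indicator (Eset r) z)"
      by simp
    also have "\<dots> \<le> measure_pmf.expectation Y (\<lambda>z. xf r z + xf r (sig z))"
    proof (rule integral_mono_AE)
      show "AE z in measure_pmf Y. 2 * indicator (Eset r) z \<le> xf r z + xf r (sig z)"
      proof (rule AE_pmfI)
        fix z assume "z \<in> set_pmf Y"
        then obtain c1 s1 c2 s2 where z: "z = ((c1,s1),(c2,s2))" "c1 \<in> set_pmf \<nu>" "c2 \<in> set_pmf \<nu>"
          unfolding Y_def by (metis SigmaE set_pair_pmf)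
        then show "2 * indicator (Eset r) z \<le> xf r z + xf r (sig z)"
          using xf_pair[of c1 r c2 s1 s2] nu by auto
      qed
    qed (use iind ixf ixf2 in auto)
    also have "\<dots> = 2 * measure_pmf.expectation Y (xf r)"
      using b by (simp add: ixf ixf2)
    finally show ?thesis by simp
  qed
  define D' where "D' = {p::nat\<times>nat. alpha r (fst p) \<noteq> alpha r (snd p)}"
  have prodE: "measure_pmf.prob Y (Eset r) = measure_pmf.prob (pair_pmf \<nu> \<nu>) D' * \<rho>"
  proof -
    have "Eset r = tau -` (D' \<times> {p. fst p = snd p})"
      by (auto simp: Eset_def D'_def tau_def split: prod.splits)
    then have "measure_pmf.prob Y (Eset r) = measure_pmf.prob (map_pmf tau Y) (D' \<times> {p. fst p = snd p})"
      by simp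
    also have "\<dots> = measure_pmf.prob (pair_pmf \<nu> \<nu>) D' * \<rho>"
      unfolding Y_def tau_map rhodef by (rule measure_pmf_prob_product) auto
    finally show ?thesis .
  qed
  have prodD: "measure_pmf.prob Y (Dset r) = measure_pmf.prob (pair_pmf \<nu> \<nu>) D'"
  proof -
    have "Dset r = tau -` (D' \<times> UNIV)"
      by (auto simp: Dset_def D'_def tau_def split: prod.splits)
    then have "measure_pmf.prob Y (Dset r) = measure_pmf.prob (map_pmf tau Y) (D' \<times> UNIV)"
      by simp
    also have "\<dots> = measure_pmf.prob (pair_pmf \<nu> \<nu>) D' * measure_pmf.prob (pair_pmf \<mu> \<mu>) UNIV"
      unfolding Y_def tau_map by (rule measure_pmf_prob_product) auto
    finally show ?thesis by simp
  qed
  define P where "P = measure_pmf.prob (pair_pmf \<nu> \<nu>) D'"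
  have P0: "P \<ge> 0" by (simp add: P_def)
  have AB: "A \<le> B * \<rho>" using exp_ineq[OF l rho] by (simp add: A_def B_def)
  have "2 * measure_pmf.expectation Y (hh r l) \<le> 2 + A * P - B * (P * \<rho>)"
    using sum1 sum2 prodE prodD B0 unfolding P_def[symmetric]
    by (smt (verit, best) mult_left_mono)
  also have "\<dots> \<le> 2" using AB P0 by (smt (verit, best) mult.commute mult.left_commute mult_right_mono)
  finally show ?thesis unfolding Y_def by simp
qed

lemma pos_pmf_set:
  assumes "r \<ge> 1"
  shows "set_pmf (pos_pmf r qq) \<subseteq> {..<r}"
proof (cases "(\<forall>j<r. 0 \<le> qq j) \<and> (\<Sum>j<r. qq j) = 1")
  case True
  define f where "f = (\<lambda>j. if j < r then qq j else 0)"
  have nn: "\<And>x. 0 \<le> f x" using True by (auto simp: f_def)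
  have "(\<integral>\<^sup>+x. ennreal (f x) \<partial>count_space UNIV) = (\<Sum>x\<in>{..<r}. ennreal (f x))"
    by (rule nn_integral_count_space') (auto simp: f_def)
  also have "\<dots> = ennreal (\<Sum>x\<in>{..<r}. f x)"
    using nn by (simp add: sum_ennreal)
  also have "(\<Sum>x\<in>{..<r}. f x) = 1" using True by (simp add: f_def)
  finally have pr: "(\<integral>\<^sup>+x. ennreal (f x) \<partial>count_space UNIV) = 1" by simp
  have "pos_pmf r qq = embed_pmf f" using True by (simp add: pos_pmf_def f_def)
  then show ?thesis
    using set_embed_pmf[of f, OF nn pr] by (auto simp: f_def split: if_splits)
next
  case False
  then show ?thesis using assms unfolding pos_pmf_def if_not_P[OF False] by simp
qed

lemma AC:
  fixes R :: "nat set" and q :: "nat \<Rightarrow> nat \<Rightarrow> real"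
  assumes fin: "finite R" and ne: "R \<noteq> {}" and cardR: "card R \<le> n" and r2: "r \<ge> 2"
  defines "W \<equiv> Pi_pmf R 0 (\<lambda>j. pos_pmf r (q j))"
  defines "\<mu> \<equiv> map_pmf (\<lambda>w. \<Sum>j\<in>R. w j) W"
  shows "measure_pmf.prob (pair_pmf \<mu> \<mu>) {p. fst p = snd p} \<ge> 1 / (12 * real r * sqrt (real n))"
proof -
  have "card R > 0" using fin ne by (simp add: card_gt_0_iff)
  then have n1: "n \<ge> 1" using cardR by linarith
  define m where "m = (\<Sum>i\<in>R. measure_pmf.expectation W (\<lambda>w. real (w i)))"
  interpret H: Hoeffding_ineq "measure_pmf W" R "\<lambda>j w. real (w j)" "\<lambda>_. 0" "\<lambda>_. real r - 1" m
  proof unfold_locales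
    show "finite R" by (rule fin)
    show "prob_space.indep_vars (measure_pmf W) (\<lambda>_. borel) (\<lambda>j w. real (w j)) R"
      unfolding W_def
      by (rule prob_space.indep_vars_compose2[OF measure_pmf.prob_space_axioms indep_vars_Pi_pmf[OF fin]]) auto
    fix i assume i: "i \<in> R"
    show "AE x in measure_pmf W. real (x i) \<in> {0..real r - 1}"
    proof (rule AE_pmfI)
      fix w assume "w \<in> set_pmf W"
      then have "w i \<in> set_pmf (pos_pmf r (q i))"
        using i fin unfolding W_def set_Pi_pmf[OF fin] PiE_dflt_def by auto
      then have "w i < r" using pos_pmf_set[of r "q i"] r2 by auto
      then show "real (w i) \<in> {0..real r - 1}" by auto
    qed
  qed (simp add: m_def)
  define \<epsilon> where "\<epsilon> = real r * sqrt (real n)"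
  have eps1: "\<epsilon> \<ge> 1"
  proof -
    have "sqrt (real n) \<ge> 1" using n1 by simp
    moreover have "real r \<ge> 1" using r2 by simp
    ultimately have "1 * 1 \<le> real r * sqrt (real n)" by (intro mult_mono) auto
    then show ?thesis unfolding \<epsilon>_def by simp
  qed
  have sumpos: "(\<Sum>i\<in>R. (real r - 1 - 0)\<^sup>2) > 0"
    using fin ne r2 by (simp add: card_gt_0_iff)
  have H1: "measure_pmf.prob W {x. \<bar>(\<Sum>i\<in>R. real (x i)) - m\<bar> \<ge> \<epsilon>} \<le> 2 * exp (-2 * \<epsilon>\<^sup>2 / (\<Sum>i\<in>R. (real r - 1 - 0)\<^sup>2))"
    using H.Hoeffding_ineq_abs_ge[of \<epsilon>] eps1 sumpos by simp
  have "2 * \<epsilon>\<^sup>2 / (\<Sum>i\<in>R. (real r - 1 - 0)\<^sup>2) \<ge> 2"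
  proof -
    have "(\<Sum>i\<in>R. (real r - 1 - 0)\<^sup>2) = real (card R) * (real r - 1)^2" by simp
    also have "\<dots> \<le> real n * (real r)^2"
      by (rule mult_mono) (use cardR r2 in auto)
    also have "\<dots> = \<epsilon>\<^sup>2" by (simp add: \<epsilon>_def power_mult_distrib)
    finally show ?thesis using sumpos by (simp add: field_simps)
  qed
  then have "exp (-2 * \<epsilon>\<^sup>2 / (\<Sum>i\<in>R. (real r - 1 - 0)\<^sup>2)) \<le> exp (-2)" by simp
  also have "exp (-2::real) \<le> 1/4"
  proof -
    have "exp (1::real) \<ge> 2" using exp_ge_add_one_self[of 1] by simp
    then have "2 * 2 \<le> exp (1::real) * exp 1" by (intro mult_mono) auto
    then have "exp (2::real) \<ge> 4" by (simp flip: exp_add)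
    then show ?thesis by (simp add: exp_minus field_simps)
  qed
  finally have H2: "measure_pmf.prob W {x. \<bar>(\<Sum>i\<in>R. real (x i)) - m\<bar> \<ge> \<epsilon>} \<le> 1/2"
    using H1 by simp
  define a where "a = nat \<lceil>m - \<epsilon>\<rceil>"
  define N where "N = nat \<lceil>2 * \<epsilon>\<rceil>"
  define I where "I = {a..<a+N}"
  have good: "measure_pmf.prob \<mu> I \<ge> 1/2"
  proof -
    have sub: "- {x. \<bar>(\<Sum>i\<in>R. real (x i)) - m\<bar> \<ge> \<epsilon>} \<subseteq> (\<lambda>w. \<Sum>j\<in>R. w j) -` I"
    proof
      fix w assume "w \<in> - {x. \<bar>(\<Sum>i\<in>R. real (x i)) - m\<bar> \<ge> \<epsilon>}"
      then have w: "\<bar>real (\<Sum>i\<in>R. w i) - m\<bar> < \<epsilon>" by simp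
      have "real a \<ge> m - \<epsilon>" unfolding a_def by linarith
      moreover have "real N \<ge> 2 * \<epsilon>" unfolding N_def by linarith
      moreover have "(\<Sum>i\<in>R. w i) \<ge> a"
      proof -
        have "real (\<Sum>i\<in>R. w i) > m - \<epsilon>" using w by linarith
        then have "int (\<Sum>i\<in>R. w i) \<ge> \<lceil>m - \<epsilon>\<rceil>" by (simp add: ceiling_le_iff)
        then show ?thesis unfolding a_def by linarith
      qed
      ultimately have "real (\<Sum>i\<in>R. w i) < real (a + N)" using w by simp
      then have "(\<Sum>i\<in>R. w i) < a + N" by (simp only: of_nat_less_iff)
      then show "w \<in> (\<lambda>w. \<Sum>j\<in>R. w j) -` I" using \<open>(\<Sum>i\<in>R. w i) \<ge> a\<close> unfolding I_def by auto
    qed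
    have "1/2 \<le> 1 - measure_pmf.prob W {x. \<bar>(\<Sum>i\<in>R. real (x i)) - m\<bar> \<ge> \<epsilon>}" using H2 by simp
    also have "\<dots> = measure_pmf.prob W (- {x. \<bar>(\<Sum>i\<in>R. real (x i)) - m\<bar> \<ge> \<epsilon>})"
      by (simp add: measure_pmf.prob_compl[symmetric] Compl_eq_Diff_UNIV)
    also have "\<dots> \<le> measure_pmf.prob W ((\<lambda>w. \<Sum>j\<in>R. w j) -` I)"
      by (rule measure_pmf.finite_measure_mono[OF sub]) simp
    also have "\<dots> = measure_pmf.prob \<mu> I" by (simp add: \<mu>_def)
    finally show ?thesis .
  qed
  have Npos: "N \<ge> 1" using eps1 unfolding N_def by linarith
  have Nle: "real N \<le> 3 * \<epsilon>" using eps1 unfolding N_def by linarith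
  have cardI: "card I = N" by (simp add: I_def)
  have s1: "(\<Sum>s\<in>I. pmf \<mu> s) \<ge> 1/2" using good by (simp add: measure_measure_pmf_finite I_def)
  have "(\<Sum>s\<in>I. pmf \<mu> s)\<^sup>2 \<le> (\<Sum>s\<in>I. (pmf \<mu> s)\<^sup>2) * real (card I)"
    by (rule sum_squared_le_sum_of_squares)
  moreover have "(1/2)^2 \<le> (\<Sum>s\<in>I. pmf \<mu> s)\<^sup>2" using s1 by (rule power_mono) simp
  ultimately have "1/4 \<le> (\<Sum>s\<in>I. (pmf \<mu> s)\<^sup>2) * real N" using cardI by (simp add: power2_eq_square)
  then have sq: "(\<Sum>s\<in>I. (pmf \<mu> s)\<^sup>2) \<ge> 1 / (4 * real N)" using Npos by (simp add: field_simps)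
  have "1 / (12 * real r * sqrt (real n)) = 1 / (4 * (3 * \<epsilon>))" by (simp add: \<epsilon>_def)
  also have "\<dots> \<le> 1 / (4 * real N)"
    by (rule divide_left_mono) (use Nle Npos in auto)
  also have "\<dots> \<le> (\<Sum>s\<in>I. (pmf \<mu> s)\<^sup>2)" by (rule sq)
  also have "\<dots> = measure_pmf.prob (pair_pmf \<mu> \<mu>) ((\<lambda>s. (s,s)) ` I)"
    by (simp add: measure_measure_pmf_finite sum.reindex inj_on_def pmf_pair power2_eq_square I_def)
  also have "\<dots> \<le> measure_pmf.prob (pair_pmf \<mu> \<mu>) {p. fst p = snd p}"
    by (rule measure_pmf.finite_measure_mono) auto
  finally show ?thesis .
qed

definition Phi :: "nat \<Rightarrow> nat \<Rightarrow> real \<Rightarrow> real \<Rightarrow> real \<Rightarrow> (nat \<Rightarrow> nat \<Rightarrow> real) \<Rightarrow> real" where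
  "Phi i r K l \<theta> q = exp (- l * K * (q i (r - 1) - \<theta>))"

definition Upd :: "real \<Rightarrow> ((nat \<Rightarrow> nat) \<Rightarrow> real) \<Rightarrow> (nat \<Rightarrow> nat \<Rightarrow> real) \<Rightarrow> (nat \<Rightarrow> nat) \<times> (nat \<Rightarrow> nat) \<Rightarrow> (nat \<Rightarrow> nat \<Rightarrow> real)" where
  "Upd K f p z = (case z of (x0, y0) \<Rightarrow>
       let x = (if f x0 < f y0 then y0 else x0);
           y = (if f x0 < f y0 then x0 else y0)
       in (\<lambda>i j. p i j + ((if x i = j then 1 else 0) - (if y i = j then 1 else 0)) / K))"

lemma cga_step_map: "cga_step n r K f p = map_pmf (Upd K f p) (pair_pmf (sample_pmf n r p) (sample_pmf n r p))"
  unfolding cga_step_def pair_pmf_def map_pmf_def Upd_def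
  by (simp add: bind_assoc_pmf bind_return_pmf)

lemma sample_split:
  assumes "i < n"
  shows "sample_pmf n r p = map_pmf (\<lambda>(y,f). f(i:=y)) (pair_pmf (pos_pmf r (p i)) (Pi_pmf ({..<n} - {i}) 0 (\<lambda>j. pos_pmf r (p j))))"
proof -
  have "{..<n} = insert i ({..<n} - {i})" using assms by auto
  then show ?thesis unfolding sample_pmf_def
    by (metis Pi_pmf_insert finite_Diff finite_lessThan Diff_iff insertI1)
qed

lemma gonemax_upd:
  assumes "i < n"
  shows "gonemax n (w(i:=c)) = real (c + (\<Sum>j\<in>{..<n} - {i}. w j))"
proof -
  have "{..<n} = insert i ({..<n} - {i})" using assms by auto
  then have "gonemax n (w(i:=c)) = real c + (\<Sum>j\<in>{..<n} - {i}. real ((w(i:=c)) j))"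
    unfolding gonemax_def by (metis (no_types, lifting) Diff_iff finite_Diff finite_lessThan fun_upd_same insertI1 sum.insert)
  also have "(\<Sum>j\<in>{..<n} - {i}. real ((w(i:=c)) j)) = (\<Sum>j\<in>{..<n} - {i}. real (w j))"
    by (rule sum.cong) auto
  finally show ?thesis by (simp only: of_nat_add of_nat_sum)
qed

lemma Phi_Upd:
  assumes K: "K > 0"
  shows "Phi i r K l \<theta> (Upd K f q (a,b)) = Phi i r K l \<theta> q *
     exp (- l * ((if (if f a < f b then b else a) i = r - 1 then 1 else 0) - (if (if f a < f b then a else b) i = r - 1 then 1 else 0)))"
proof -
  define D :: real where "D = (if (if f a < f b then b else a) i = r - 1 then 1 else 0) - (if (if f a < f b then a else b) i = r - 1 then 1 else 0)"
  have u: "Upd K f q (a,b) i (r-1) = q i (r-1) + D / K" by (simp add: Upd_def Let_def D_def)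
  have "- l * K * ((q i (r - 1) + D / K) - \<theta>) = - l * K * (q i (r - 1) - \<theta>) + (- l * D)"
    using K by (simp add: field_simps)
  then show ?thesis unfolding Phi_def u D_def[symmetric] by (simp only: exp_add)
qed

lemma step_super:
  assumes n2: "n \<ge> 2" and i: "i < n" and r2: "r \<ge> 2" and K: "K > 0"
    and l: "l = 1 / (12 * real r * sqrt (real n))"
  shows "(\<integral>\<^sup>+q'. ennreal (Phi i r K l \<theta> q') \<partial>cga_step n r K (gonemax n) q) \<le> ennreal (Phi i r K l \<theta> q)"
proof -
  define f where "f = gonemax n"
  define S where "S = sample_pmf n r q"
  define R where "R = {..<n} - {i}"
  define \<nu> where "\<nu> = pos_pmf r (q i)"
  define W where "W = Pi_pmf R 0 (\<lambda>j. pos_pmf r (q j))"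
  define \<mu> where "\<mu> = map_pmf (\<lambda>w. \<Sum>j\<in>R. w j) W"
  define emb :: "nat \<times> (nat \<Rightarrow> nat) \<Rightarrow> (nat \<Rightarrow> nat)" where "emb = (\<lambda>(y,f). f(i:=y))"
  define proj :: "nat \<times> (nat \<Rightarrow> nat) \<Rightarrow> nat \<times> nat" where "proj = (\<lambda>(c,w). (c, \<Sum>j\<in>R. w j))"
  define g where "g = (\<lambda>(a,b). exp (- l * ((if (if f a < f b then b else a) i = r - 1 then 1 else 0) - (if (if f a < f b then a else b) i = r - 1 then 1 else (0::real)))))"
  have l0: "l \<ge> 0" using l by simp
  have lpos: "l > 0" using l r2 n2 by simp
  have l1: "l \<le> 1"
  proof -
    have "sqrt (real n) \<ge> 1" using n2 by simp
    moreover have "12 * real r \<ge> 1" using r2 by simp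
    ultimately have "1 * 1 \<le> 12 * real r * sqrt (real n)" by (intro mult_mono) auto
    then show ?thesis unfolding l by simp
  qed
  have gbdd: "\<bar>g z\<bar> \<le> exp l" for z
  proof -
    obtain a b where z: "z = (a,b)" by (metis prod.collapse)
    have "- l * ((if (if f a < f b then b else a) i = r - 1 then 1 else 0) - (if (if f a < f b then a else b) i = r - 1 then 1 else (0::real))) \<le> l"
      using l0 by (auto split: if_splits)
    then show ?thesis by (simp add: g_def z)
  qed
  have gnn: "g z \<ge> 0" for z by (simp add: g_def split: prod.splits)
  have S_eq: "S = map_pmf emb (pair_pmf \<nu> W)"
    unfolding S_def emb_def \<nu>_def W_def R_def by (rule sample_split[OF i])
  have "(\<integral>\<^sup>+q'. ennreal (Phi i r K l \<theta> q') \<partial>cga_step n r K (gonemax n) q)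
      = (\<integral>\<^sup>+z. ennreal (Phi i r K l \<theta> q * g z) \<partial>pair_pmf S S)"
    unfolding cga_step_map S_def[symmetric] f_def[symmetric] nn_integral_map_pmf
    by (rule nn_integral_cong) (auto simp: Phi_Upd[OF K] g_def split: prod.splits)
  also have "\<dots> = ennreal (measure_pmf.expectation (pair_pmf S S) (\<lambda>z. Phi i r K l \<theta> q * g z))"
  proof (rule nn_integral_eq_integral)
    have "integrable (measure_pmf (pair_pmf S S)) g" by (rule int_bdd[where B="exp l"]) (rule gbdd)
    then show "integrable (measure_pmf (pair_pmf S S)) (\<lambda>z. Phi i r K l \<theta> q * g z)" by simp
    show "AE z in measure_pmf (pair_pmf S S). 0 \<le> Phi i r K l \<theta> q * g z"
      by (rule AE_I2) (simp add: Phi_def gnn)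
  qed
  also have "measure_pmf.expectation (pair_pmf S S) (\<lambda>z. Phi i r K l \<theta> q * g z) =
      Phi i r K l \<theta> q * measure_pmf.expectation (pair_pmf S S) g"
    by simp
  also have "measure_pmf.expectation (pair_pmf S S) g = measure_pmf.expectation (pair_pmf (pair_pmf \<nu> \<mu>) (pair_pmf \<nu> \<mu>)) (hh r l)"
  proof -
    have "pair_pmf S S = map_pmf (\<lambda>(a,b). (emb a, emb b)) (pair_pmf (pair_pmf \<nu> W) (pair_pmf \<nu> W))"
      unfolding S_eq by (rule map_pair[symmetric])
    then have "measure_pmf.expectation (pair_pmf S S) g = measure_pmf.expectation (pair_pmf (pair_pmf \<nu> W) (pair_pmf \<nu> W)) (\<lambda>z. g (case z of (a,b) \<Rightarrow> (emb a, emb b)))"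
      by simp
    also have "\<dots> = measure_pmf.expectation (pair_pmf (pair_pmf \<nu> W) (pair_pmf \<nu> W)) (\<lambda>z. hh r l (case z of (a,b) \<Rightarrow> (proj a, proj b)))"
    proof (rule Bochner_Integration.integral_cong[OF refl])
      fix z :: "(nat \<times> (nat \<Rightarrow> nat)) \<times> (nat \<times> (nat \<Rightarrow> nat))"
      obtain c1 w1 c2 w2 where z: "z = ((c1,w1),(c2,w2))" by (metis prod.collapse)
      have f1: "f (emb (c1,w1)) = real (c1 + (\<Sum>j\<in>R. w1 j))"
        unfolding f_def emb_def R_def using gonemax_upd[OF i] by simp
      have f2: "f (emb (c2,w2)) = real (c2 + (\<Sum>j\<in>R. w2 j))"
        unfolding f_def emb_def R_def using gonemax_upd[OF i] by simp
      have e1: "\<And>c w. emb (c,w) i = c" by (auto simp: emb_def)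
      show "g (case z of (a,b) \<Rightarrow> (emb a, emb b)) = hh r l (case z of (a,b) \<Rightarrow> (proj a, proj b))"
        unfolding z g_def hh_def proj_def dval_def alpha_def
        by (cases "c1 + (\<Sum>j\<in>R. w1 j) < c2 + (\<Sum>j\<in>R. w2 j)") (simp_all add: f1 f2 e1 del: of_nat_add of_nat_sum)
    qed
    also have "\<dots> = measure_pmf.expectation (map_pmf (\<lambda>(a,b). (proj a, proj b)) (pair_pmf (pair_pmf \<nu> W) (pair_pmf \<nu> W))) (hh r l)"
      by simp
    also have "map_pmf (\<lambda>(a,b). (proj a, proj b)) (pair_pmf (pair_pmf \<nu> W) (pair_pmf \<nu> W)) = pair_pmf (map_pmf proj (pair_pmf \<nu> W)) (map_pmf proj (pair_pmf \<nu> W))"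
      by (rule map_pair)
    also have "map_pmf proj (pair_pmf \<nu> W) = pair_pmf \<nu> \<mu>"
    proof -
      have "map_pmf proj (pair_pmf \<nu> W) = map_pmf (\<lambda>(a,b). (id a, (\<lambda>w. \<Sum>j\<in>R. w j) b)) (pair_pmf \<nu> W)"
        unfolding proj_def by simp
      also have "\<dots> = pair_pmf (map_pmf id \<nu>) \<mu>" unfolding \<mu>_def by (rule map_pair)
      finally show ?thesis by simp
    qed
    finally show ?thesis .
  qed
  also have "measure_pmf.expectation (pair_pmf (pair_pmf \<nu> \<mu>) (pair_pmf \<nu> \<mu>)) (hh r l) \<le> 1"
  proof (rule core)
    show "set_pmf \<nu> \<subseteq> {..<r}" unfolding \<nu>_def by (rule pos_pmf_set) (use r2 in simp)
    show "0 \<le> l" by (rule l0)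
    have ac: "measure_pmf.prob (pair_pmf \<mu> \<mu>) {p. fst p = snd p} \<ge> 1 / (12 * real r * sqrt (real n))"
    proof -
      have "(if i = 0 then 1 else 0) \<in> R" using n2 by (auto simp: R_def)
      then have ne: "R \<noteq> {}" by auto
      have "card R \<le> card {..<n}" unfolding R_def by (rule card_mono) auto
      then have cR: "card R \<le> n" by simp
      show ?thesis unfolding \<mu>_def W_def by (rule AC[OF _ ne cR r2]) (simp add: R_def)
    qed
    have "exp l \<le> 1 + l + l^2" by (rule exp_bound[OF l0 l1])
    moreover have "l^2 \<le> l" using l0 l1 by (simp add: power2_eq_square mult_left_le)
    ultimately show "exp l - 1 \<le> 2 * measure_pmf.prob (pair_pmf \<mu> \<mu>) {p. fst p = snd p}"
      using ac l by linarith
  qed simp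
  finally show ?thesis
    by (auto simp: Phi_def ennreal_leI mult_left_le)
qed

lemma run_super:
  assumes "\<And>q. (\<integral>\<^sup>+q'. \<Phi> q' \<partial>cga_step n r K f q) \<le> \<Phi> q"
  shows "(\<integral>\<^sup>+q'. \<Phi> q' \<partial>cga_run n r K f p t) \<le> \<Phi> p"
proof (induction t)
  case 0 then show ?case by simp
next
  case (Suc t)
  have "(\<integral>\<^sup>+q'. \<Phi> q' \<partial>cga_run n r K f p (Suc t)) = (\<integral>\<^sup>+q. (\<integral>\<^sup>+q'. \<Phi> q' \<partial>cga_step n r K f q) \<partial>cga_run n r K f p t)"
    by simp
  also have "\<dots> \<le> (\<integral>\<^sup>+q. \<Phi> q \<partial>cga_run n r K f p t)"
    by (rule nn_integral_mono) (rule assms)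
  also have "\<dots> \<le> \<Phi> p" by (rule Suc.IH)
  finally show ?case .
qed

lemma last_traj: "map_pmf last (cga_traj n r K f p t) = cga_run n r K f p t"
proof (induction t)
  case 0 then show ?case by simp
next
  case (Suc t)
  have "map_pmf last (cga_traj n r K f p (Suc t)) =
        bind_pmf (cga_traj n r K f p t) (\<lambda>ps. cga_step n r K f (last ps))"
    by (simp add: map_bind_pmf map_pmf_comp)
  also have "\<dots> = bind_pmf (map_pmf last (cga_traj n r K f p t)) (cga_step n r K f)"
    by (simp add: bind_map_pmf)
  finally show ?case using Suc.IH by simp
qed

lemma traj_emeasure:
  "emeasure (measure_pmf (cga_traj n r K f p t)) {ps. \<exists>q\<in>set ps. B q}
     \<le> (\<Sum>s\<le>t. emeasure (measure_pmf (cga_run n r K f p s)) {q. B q})"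
proof (induction t)
  case 0 then show ?case by (simp add: indicator_def)
next
  case (Suc t)
  define T where "T = cga_traj n r K f p t"
  define E where "E = {ps. \<exists>q\<in>set ps. B q}"
  have pt: "emeasure (measure_pmf (map_pmf (\<lambda>q. ps @ [q]) (cga_step n r K f (last ps)))) E
            \<le> indicator E ps + emeasure (measure_pmf (cga_step n r K f (last ps))) {q. B q}" for ps
  proof (cases "ps \<in> E")
    case True
    have "emeasure (measure_pmf (map_pmf (\<lambda>q. ps @ [q]) (cga_step n r K f (last ps)))) E \<le> 1"
      by (simp add: measure_pmf.emeasure_le_1)
    then show ?thesis using True by (simp add: add_increasing2)
  next
    case False
    have "(\<lambda>q. ps @ [q]) -` E = {q. B q}" using False by (auto simp: E_def)
    then show ?thesis using False by simp
  qed
  have "emeasure (measure_pmf (cga_traj n r K f p (Suc t))) E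
      = (\<integral>\<^sup>+ps. emeasure (measure_pmf (map_pmf (\<lambda>q. ps @ [q]) (cga_step n r K f (last ps)))) E \<partial>T)"
    by (simp add: T_def)
  also have "\<dots> \<le> (\<integral>\<^sup>+ps. indicator E ps + emeasure (measure_pmf (cga_step n r K f (last ps))) {q. B q} \<partial>T)"
    by (rule nn_integral_mono) (rule pt)
  also have "\<dots> = (\<integral>\<^sup>+ps. indicator E ps \<partial>T) + (\<integral>\<^sup>+ps. emeasure (measure_pmf (cga_step n r K f (last ps))) {q. B q} \<partial>T)"
    by (rule nn_integral_add) auto
  also have "(\<integral>\<^sup>+ps. indicator E ps \<partial>T) = emeasure (measure_pmf T) E" by simp
  also have "(\<integral>\<^sup>+ps. emeasure (measure_pmf (cga_step n r K f (last ps))) {q. B q} \<partial>T)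
      = emeasure (measure_pmf (cga_run n r K f p (Suc t))) {q. B q}"
  proof -
    have "cga_run n r K f p (Suc t) = bind_pmf (map_pmf last T) (cga_step n r K f)"
      by (simp add: T_def last_traj)
    then show ?thesis by (simp add: bind_map_pmf)
  qed
  finally have X: "emeasure (measure_pmf (cga_traj n r K f p (Suc t))) E
      \<le> emeasure (measure_pmf T) E + emeasure (measure_pmf (cga_run n r K f p (Suc t))) {q. B q}" .
  have "emeasure (measure_pmf T) E + emeasure (measure_pmf (cga_run n r K f p (Suc t))) {q. B q}
     \<le> (\<Sum>s\<le>t. emeasure (measure_pmf (cga_run n r K f p s)) {q. B q}) + emeasure (measure_pmf (cga_run n r K f p (Suc t))) {q. B q}"
    by (rule add_right_mono) (use Suc.IH in \<open>simp add: T_def E_def\<close>)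
  with X show ?case unfolding sum.atMost_Suc E_def by (rule order_trans)
qed

lemma prob_bound:
  assumes n2: "n \<ge> 2" and i: "i < n" and r2: "r \<ge> 2" and K: "K > 0"
    and pk: "p i (r - 1) \<ge> k / real r"
  shows "measure_pmf.prob (cga_traj n r K (gonemax n) p T) {ps. \<exists>q\<in>set ps. q i (r - 1) < k / real r - 1 / (2 * real r)}
     \<le> real (Suc T) * exp (- (K / (24 * (real r)^2 * sqrt (real n))))"
proof -
  define l where "l = 1 / (12 * real r * sqrt (real n))"
  define \<theta> where "\<theta> = k / real r - 1 / (2 * real r)"
  define \<Phi> where "\<Phi> = (\<lambda>q. ennreal (Phi i r K l \<theta> q))"
  have l0: "l \<ge> 0" by (simp add: l_def)
  have single: "emeasure (measure_pmf (cga_run n r K (gonemax n) p s)) {q. q i (r - 1) < \<theta>} \<le> \<Phi> p" for s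
  proof -
    have "emeasure (measure_pmf (cga_run n r K (gonemax n) p s)) {q. q i (r - 1) < \<theta>}
        = (\<integral>\<^sup>+q. indicator {q. q i (r - 1) < \<theta>} q \<partial>cga_run n r K (gonemax n) p s)"
      by simp
    also have "\<dots> \<le> (\<integral>\<^sup>+q. \<Phi> q \<partial>cga_run n r K (gonemax n) p s)"
    proof (rule nn_integral_mono)
      fix q :: "nat \<Rightarrow> nat \<Rightarrow> real"
      show "indicator {q. q i (r - 1) < \<theta>} q \<le> \<Phi> q"
      proof (cases "q i (r - 1) < \<theta>")
        case True
        have "0 \<le> - l * K * (q i (r - 1) - \<theta>)"
          using True l0 K by (simp add: mult_nonneg_nonpos mult_nonpos_nonneg)
        then have "1 \<le> Phi i r K l \<theta> q" unfolding Phi_def by simp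
        then show ?thesis using True by (simp add: \<Phi>_def)
      qed (simp add: \<Phi>_def)
    qed
    also have "\<dots> \<le> \<Phi> p"
      unfolding \<Phi>_def by (rule run_super) (rule step_super[OF n2 i r2 K l_def])
    finally show ?thesis .
  qed
  have Pp: "Phi i r K l \<theta> p \<le> exp (- (K / (24 * (real r)^2 * sqrt (real n))))"
  proof -
    have d: "p i (r - 1) - \<theta> \<ge> 1 / (2 * real r)" using pk by (simp add: \<theta>_def)
    have "l * K * (1 / (2 * real r)) \<le> l * K * (p i (r - 1) - \<theta>)"
      by (rule mult_left_mono[OF d]) (use l0 K in simp)
    moreover have "l * K * (1 / (2 * real r)) = K / (24 * (real r)^2 * sqrt (real n))"
      by (simp add: l_def power2_eq_square field_simps)
    ultimately show ?thesis unfolding Phi_def by simp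
  qed
  have "emeasure (measure_pmf (cga_traj n r K (gonemax n) p T)) {ps. \<exists>q\<in>set ps. q i (r - 1) < \<theta>}
      \<le> (\<Sum>s\<le>T. emeasure (measure_pmf (cga_run n r K (gonemax n) p s)) {q. q i (r - 1) < \<theta>})"
    by (rule traj_emeasure)
  also have "\<dots> \<le> (\<Sum>s\<le>T. \<Phi> p)" by (rule sum_mono) (rule single)
  also have "\<dots> = ennreal (real (Suc T) * Phi i r K l \<theta> p)"
    by (simp add: \<Phi>_def ennreal_mult' Phi_def ennreal_of_nat_eq_real_of_nat)
  finally have "measure_pmf.prob (cga_traj n r K (gonemax n) p T) {ps. \<exists>q\<in>set ps. q i (r - 1) < \<theta>}
      \<le> real (Suc T) * Phi i r K l \<theta> p"
    by (simp add: measure_pmf.emeasure_eq_measure Phi_def)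
  also have "\<dots> \<le> real (Suc T) * exp (- (K / (24 * (real r)^2 * sqrt (real n))))"
    by (rule mult_left_mono[OF Pp]) simp
  finally show ?thesis unfolding \<theta>_def .
qed

lemma final_arith:
  fixes n r a :: nat and K :: real
  assumes n2: "n \<ge> 2" and r2: "r \<ge> 2" and rn: "real r \<le> real n ^ a" and a1: "a \<ge> 1" and K: "K > 0"
    and cK: "K \<ge> real (29 * (4 * a + 11)) * real r ^ 2 * sqrt (real n) * ln (real n)"
  shows "real (Suc (nat \<lfloor>1 * K * real r * sqrt (real n) * (ln (real r) + ln (real n))\<rfloor>)) *
           exp (- (K / (24 * (real r)^2 * sqrt (real n))))
         \<le> real n powr (- (K / (288 * real r ^ 2 * sqrt (real n) * ln (real n))))"
proof -
  define m where "m = 4 * a + 1"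
  define E where "E = K / (real r ^ 2 * sqrt (real n))"
  have sn: "sqrt (real n) > 0" using n2 by simp
  have rp: "real r > 0" using r2 by simp
  have lnn: "ln (real n) > 0" using n2 by simp
  have ln2: "ln (real n) \<ge> ln 2" using n2 by simp
  have KE: "K = E * real r ^ 2 * sqrt (real n)" using sn rp by (simp add: E_def)
  have Ec: "E \<ge> real (29 * (4 * a + 11)) * ln (real n)"
  proof -
    have "real (29 * (4 * a + 11)) * ln (real n) * (real r ^ 2 * sqrt (real n)) \<le> K"
      using cK by (simp add: mult_ac)
    then show ?thesis unfolding E_def using sn rp by (simp add: field_simps)
  qed
  have E1: "E \<ge> 1"
  proof -
    have "ln (2::real) \<ge> 1/2" using ln_2_less_1 ln2_ge_two_thirds by linarith
    then have "real (29 * (4 * a + 11)) * ln (real n) \<ge> 2 * (1/2)"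
      using ln2 by (intro mult_mono) auto
    then show ?thesis using Ec by linarith
  qed
  have nn: "real n \<ge> 2" using n2 by simp
  have npow: "real n ^ a \<ge> real n" using power_increasing[OF a1, of "real n"] nn by simp
  have lnsum: "ln (real r) + ln (real n) \<le> 2 * real n ^ a"
  proof -
    have "ln (real r) \<le> real r" using ln_le_minus_one[OF rp] by linarith
    moreover have "ln (real n) \<le> real n" using ln_le_minus_one[of "real n"] nn by linarith
    ultimately show ?thesis using rn npow by linarith
  qed
  have X0: "0 \<le> 1 * K * real r * sqrt (real n) * (ln (real r) + ln (real n))"
    using K rp sn r2 n2 by (simp add: add_nonneg_nonneg)
  have T1: "real (nat \<lfloor>1 * K * real r * sqrt (real n) * (ln (real r) + ln (real n))\<rfloor>) \<le> 1 * K * real r * sqrt (real n) * (ln (real r) + ln (real n))"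
    using X0 by linarith
  have "1 * K * real r * sqrt (real n) * (ln (real r) + ln (real n)) = E * real r ^ 3 * real n * (ln (real r) + ln (real n))"
    unfolding KE using n2 by (simp add: power2_eq_square power3_eq_cube mult_ac)
  also have "\<dots> \<le> E * (real n ^ a) ^ 3 * real n * (2 * real n ^ a)"
  proof -
    have "real r ^ 3 \<le> (real n ^ a) ^ 3" by (rule power_mono[OF rn]) simp
    moreover have "0 \<le> ln (real r) + ln (real n)" using r2 n2 by simp
    have E0: "E \<ge> 0" using E1 by simp
    have "E * real r ^ 3 \<le> E * (real n ^ a) ^ 3"
      by (rule mult_left_mono[OF \<open>real r ^ 3 \<le> (real n ^ a) ^ 3\<close> E0])
    then have "E * real r ^ 3 * real n \<le> E * (real n ^ a) ^ 3 * real n"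
      by (rule mult_right_mono) simp
    then show ?thesis
      by (rule mult_mono[OF _ lnsum]) (use \<open>0 \<le> ln (real r) + ln (real n)\<close> E0 in simp_all)
  qed
  also have "\<dots> = 2 * E * real n ^ m"
  proof -
    have "(real n ^ a) ^ 3 * real n * (2 * real n ^ a) = 2 * ((real n ^ a) ^ 4 * real n)"
      by (simp add: eval_nat_numeral mult_ac)
    also have "(real n ^ a) ^ 4 * real n = real n ^ m"
    proof -
      have "real n ^ m = real n ^ (a * 4) * real n ^ 1" unfolding m_def
        by (metis mult.commute power_add)
      then show ?thesis by (simp add: power_mult)
    qed
    finally show ?thesis by simp
  qed
  finally have T0: "1 * K * real r * sqrt (real n) * (ln (real r) + ln (real n)) \<le> 2 * E * real n ^ m" .
  have T2: "real (Suc (nat \<lfloor>1 * K * real r * sqrt (real n) * (ln (real r) + ln (real n))\<rfloor>)) \<le> 3 * E * real n ^ m"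
  proof -
    have "1 \<le> real n ^ m" using nn by (simp add: one_le_power)
    then have "1 * 1 \<le> E * real n ^ m" by (intro mult_mono) (use E1 in auto)
    then show ?thesis using T1 \<open>1 * K * real r * sqrt (real n) * (ln (real r) + ln (real n)) \<le> 2 * E * real n ^ m\<close>
      by simp
  qed
  have EK: "K / (24 * (real r)^2 * sqrt (real n)) = E / 24" by (simp add: E_def)
  have RHS: "real n powr (- (K / (288 * real r ^ 2 * sqrt (real n) * ln (real n)))) = exp (- (E / 288))"
  proof -
    have "- (K / (288 * real r ^ 2 * sqrt (real n) * ln (real n))) * ln (real n) = - (E / 288)"
      using lnn by (simp add: E_def field_simps)
    then show ?thesis using n2 by (simp add: powr_def)
  qed
  have key: "3 * E * real n ^ m \<le> exp (E / 24 - E / 288)"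
  proof -
    have e1: "3 * E \<le> 864 * exp (E / 288)"
      using exp_ge_add_one_self[of "E / 288"] by linarith
    have "real (m + 10) * ln (real n) \<le> 10 * E / 288"
    proof -
      have "real (m + 10) * ln (real n) \<le> (10 / 288) * (real (29 * (4 * a + 11)) * ln (real n))"
        using lnn by (simp add: m_def field_simps)
      then show ?thesis using Ec by linarith
    qed
    then have e2a: "exp (real (m + 10) * ln (real n)) \<le> exp (10 * E / 288)" by (simp only: exp_le_cancel_iff)
    have e2b: "exp (real (m + 10) * ln (real n)) = real n ^ (m + 10)"
      unfolding exp_of_nat_mult using n2 by simp
    have e2: "real n ^ m * real n ^ 10 \<le> exp (10 * E / 288)"
      using e2a e2b power_add[of "real n" m 10] by linarith
    have "(2::real) ^ 10 \<le> real n ^ 10" by (rule power_mono) (use nn in auto)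
    then have "864 * real n ^ m \<le> real n ^ m * real n ^ 10" using nn by simp
    then have e3: "864 * real n ^ m \<le> exp (10 * E / 288)" using e2 by linarith
    have "3 * E * real n ^ m \<le> (864 * exp (E / 288)) * real n ^ m"
      by (rule mult_right_mono[OF e1]) simp
    also have "\<dots> = exp (E / 288) * (864 * real n ^ m)" by simp
    also have "\<dots> \<le> exp (E / 288) * exp (10 * E / 288)"
      by (rule mult_left_mono[OF e3]) simp
    also have "\<dots> = exp (E / 24 - E / 288)" by (simp flip: exp_add)
    finally show ?thesis .
  qed
  have "real (Suc (nat \<lfloor>1 * K * real r * sqrt (real n) * (ln (real r) + ln (real n))\<rfloor>)) * exp (- (E / 24))
      \<le> 3 * E * real n ^ m * exp (- (E / 24))"
    by (rule mult_right_mono[OF T2]) simp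
  also have "\<dots> \<le> exp (E / 24 - E / 288) * exp (- (E / 24))"
    by (rule mult_right_mono[OF key]) simp
  also have "\<dots> = exp (- (E / 288))" by (simp flip: exp_add)
  finally show ?thesis unfolding EK RHS .
qed

theorem lemma1:
  fixes A D :: real
  shows "\<exists>c c' :: real. \<exists>n0 :: nat. c' > 0 \<and>
    (\<forall>n r :: nat. \<forall>K k :: real. \<forall>i t :: nat. \<forall>p.
       n \<ge> n0 \<longrightarrow> r \<ge> 2 \<longrightarrow> K > 0 \<longrightarrow> k > 0 \<longrightarrow> i < n \<longrightarrow>
       real r \<le> A * real n powr D \<longrightarrow> K \<le> A * real n powr D \<longrightarrow>
       K \<ge> c * real r ^ 2 * sqrt (real n) * ln (real n) \<longrightarrow>
       p \<in> set_pmf (cga_run n r K (gonemax n) (cga_init r) t) \<longrightarrow>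
       p i (r - 1) \<ge> k / real r \<longrightarrow>
       measure_pmf.prob
         (cga_traj n r K (gonemax n) p
            (nat \<lfloor>c' * K * real r * sqrt (real n) * (ln (real r) + ln (real n))\<rfloor>))
         {ps. \<exists>q\<in>set ps. q i (r - 1) < k / real r - 1 / (2 * real r)}
       \<le> real n powr (- (K / (288 * real r ^ 2 * sqrt (real n) * ln (real n)))))"
proof -
  define b where "b = nat \<lceil>max D 0\<rceil>"
  define a where "a = b + 1"
  define c where "c = real (29 * (4 * a + 11))"
  define n0 where "n0 = max 2 (nat \<lceil>A\<rceil>)"
  show ?thesis
  proof (rule exI[of _ c], rule exI[of _ "1::real"], rule exI[of _ n0], rule conjI[OF zero_less_one], intro allI impI)
    fix n r :: nat and K k :: real and i t :: nat and p
    assume nn0: "n \<ge> n0" and r2: "r \<ge> 2" and K: "K > 0" and k: "k > 0" and i: "i < n"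
      and rA: "real r \<le> A * real n powr D" and KA: "K \<le> A * real n powr D"
      and cK: "K \<ge> c * real r ^ 2 * sqrt (real n) * ln (real n)"
      and pin: "p \<in> set_pmf (cga_run n r K (gonemax n) (cga_init r) t)"
      and pk: "p i (r - 1) \<ge> k / real r"
    have n2: "n \<ge> 2" using nn0 by (simp add: n0_def)
    have nA: "real n \<ge> A"
    proof -
      have "nat \<lceil>A\<rceil> \<le> n" using nn0 by (simp add: n0_def)
      then show ?thesis by linarith
    qed
    have rn: "real r \<le> real n ^ a"
    proof -
      have n1: "real n \<ge> 1" using n2 by simp
      have "real n powr D \<le> real n powr (real b)"
        by (rule powr_mono) (use n1 in \<open>auto simp: b_def\<close>, linarith)
      also have "\<dots> = real n ^ b" using n2 by (simp add: powr_realpow)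
      finally have pb: "real n powr D \<le> real n ^ b" .
      have "A * real n powr D \<le> real n * real n powr D"
        by (rule mult_right_mono[OF nA]) simp
      also have "\<dots> \<le> real n * real n ^ b"
        by (rule mult_left_mono[OF pb]) simp
      also have "\<dots> = real n ^ a" by (simp add: a_def)
      finally show ?thesis using rA by linarith
    qed
    have "measure_pmf.prob
         (cga_traj n r K (gonemax n) p
            (nat \<lfloor>1 * K * real r * sqrt (real n) * (ln (real r) + ln (real n))\<rfloor>))
         {ps. \<exists>q\<in>set ps. q i (r - 1) < k / real r - 1 / (2 * real r)}
       \<le> real (Suc (nat \<lfloor>1 * K * real r * sqrt (real n) * (ln (real r) + ln (real n))\<rfloor>)) *
           exp (- (K / (24 * (real r)^2 * sqrt (real n))))"
      using prob_bound[of n i r K k p] n2 i r2 K pk by blast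
    also have "\<dots> \<le> real n powr (- (K / (288 * real r ^ 2 * sqrt (real n) * ln (real n))))"
      by (rule final_arith[OF n2 r2 rn _ K]) (use cK in \<open>simp_all add: a_def c_def\<close>)
    finally show "measure_pmf.prob
         (cga_traj n r K (gonemax n) p
            (nat \<lfloor>1 * K * real r * sqrt (real n) * (ln (real r) + ln (real n))\<rfloor>))
         {ps. \<exists>q\<in>set ps. q i (r - 1) < k / real r - 1 / (2 * real r)}
       \<le> real n powr (- (K / (288 * real r ^ 2 * sqrt (real n) * ln (real n))))" .
  qed
qed

end
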